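(* Let $D$ and $E$ be finite sets of cells, where a cell is a pair $(i,j)\in\mathbb{Z}^2$ (row $i$, column $j$), and let $f:D\to E$ be a picture. For $A\in D$ define $r(A)=\mathrm{row}(A)-\mathrm{row}(f(A))$, and for $T\in E$ define $r'(T)=r(f^{-1}(T))=\mathrm{row}(f^{-1}(T))-\mathrm{row}(T)$. Then: (a) if $A,B\in D$ lie in the same row with $B$ to the left of $A$, then $r(B)\le r(A)$; (b) if $A,B\in D$ lie in the same column with $A=(i,j)$ and $B=(i+1,j)$, then $r(B)\le r(A)$; (c) if $T,T'\in E$ lie in the same row with $T'$ to the left of $T$, then $r'(T)\le r'(T')$; (d) if $T,T'\in E$ lie in the same column with $T=(i,j)$ and $T'=(i+1,j)$, then $r'(T)\le r'(T')$.
   Context: Rows are numbered from top to bottom and columns from left to right, so the cell $(i,j)$ is weakly above and weakly right of $(i',j')$ iff $i\le i'$ and $j\ge j'$; "to the left" means smaller column index. Lexicographic order on cells: $(i,j)$ precedes $(i',j')$ if $i<i'$, or $i=i'$ and $j<j'$. A picture between finite sets of cells $D$ and $E$ is a bijection $f:D\to E$ such that (1) for distinct $A,B\in D$ with $A$ weakly above and weakly right of $B$, $f(A)$ precedes $f(B)$ lexicographically, and (2) for distinct $A',B'\in E$ with $A'$ weakly above and weakly right of $B'$, $f^{-1}(A')$ precedes $f^{-1}(B')$ lexicographically. *)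

theory Defs
  imports Main
begin

type_synonym cell = "int \<times> int"

definition row :: "cell \<Rightarrow> int" where "row A = fst A"
definition col :: "cell \<Rightarrow> int" where "col A = snd A"

definition weakly_NE :: "cell \<Rightarrow> cell \<Rightarrow> bool" where
  "weakly_NE A B \<longleftrightarrow> row A \<le> row B \<and> col A \<ge> col B"

definition lex_prec :: "cell \<Rightarrow> cell \<Rightarrow> bool" where
  "lex_prec A B \<longleftrightarrow> row A < row B \<or> (row A = row B \<and> col A < col B)"

definition picture :: "(cell \<Rightarrow> cell) \<Rightarrow> cell set \<Rightarrow> cell set \<Rightarrow> bool" where
  "picture f D E \<longleftrightarrow> bij_betw f D E
     \<and> (\<forall>A\<in>D. \<forall>B\<in>D. A \<noteq> B \<and> weakly_NE A B \<longrightarrow> lex_prec (f A) (f B))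
     \<and> (\<forall>A'\<in>E. \<forall>B'\<in>E. A' \<noteq> B' \<and> weakly_NE A' B' \<longrightarrow>
            lex_prec (inv_into D f A') (inv_into D f B'))"

definition rdiff :: "(cell \<Rightarrow> cell) \<Rightarrow> cell \<Rightarrow> int" where
  "rdiff f A = row A - row (f A)"

definition rdiff' :: "(cell \<Rightarrow> cell) \<Rightarrow> cell set \<Rightarrow> cell \<Rightarrow> int" where
  "rdiff' f D T = rdiff f (inv_into D f T)"

end

theory Submission
  imports Defs
begin

theorem lemma3p3:
  fixes D E :: "cell set" and f :: "cell \<Rightarrow> cell"
  assumes "finite D" and "finite E" and "picture f D E"
  shows "(\<forall>A\<in>D. \<forall>B\<in>D. row A = row B \<and> col B < col A \<longrightarrow> rdiff f B \<le> rdiff f A)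
    \<and> (\<forall>i j. (i, j) \<in> D \<and> (i + 1, j) \<in> D \<longrightarrow> rdiff f (i + 1, j) \<le> rdiff f (i, j))
    \<and> (\<forall>T\<in>E. \<forall>T'\<in>E. row T = row T' \<and> col T' < col T \<longrightarrow> rdiff' f D T \<le> rdiff' f D T')
    \<and> (\<forall>i j. (i, j) \<in> E \<and> (i + 1, j) \<in> E \<longrightarrow> rdiff' f D (i, j) \<le> rdiff' f D (i + 1, j))"
proof -
  have bij: "bij_betw f D E"
    and P1: "\<And>A B. A\<in>D \<Longrightarrow> B\<in>D \<Longrightarrow> A \<noteq> B \<Longrightarrow> weakly_NE A B \<Longrightarrow> lex_prec (f A) (f B)"
    and P2: "\<And>A B. A\<in>E \<Longrightarrow> B\<in>E \<Longrightarrow> A \<noteq> B \<Longrightarrow> weakly_NE A B \<Longrightarrow>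
            lex_prec (inv_into D f A) (inv_into D f B)"
    using assms(3) unfolding picture_def by blast+
  have inj: "inj_on f D" by (rule bij_betw_imp_inj_on[OF bij])
  have img: "f ` D = E" by (rule bij_betw_imp_surj_on[OF bij])
  have invin: "\<And>T. T \<in> E \<Longrightarrow> inv_into D f T \<in> D"
    by (rule inv_into_into) (simp add: img)
  have finv: "\<And>T. T \<in> E \<Longrightarrow> f (inv_into D f T) = T"
    by (rule f_inv_into_f) (simp add: img)
  have invf: "\<And>A. A \<in> D \<Longrightarrow> inv_into D f (f A) = A" by (rule inv_into_f_f[OF inj])
  have fin: "\<And>A. A \<in> D \<Longrightarrow> f A \<in> E" using img by blast
  have a: "\<forall>A\<in>D. \<forall>B\<in>D. row A = row B \<and> col B < col A \<longrightarrow> rdiff f B \<le> rdiff f A"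
  proof (intro ballI impI)
    fix A B assume AB: "A \<in> D" "B \<in> D" "row A = row B \<and> col B < col A"
    have "lex_prec (f A) (f B)"
      by (rule P1) (use AB in \<open>auto simp: weakly_NE_def\<close>)
    then show "rdiff f B \<le> rdiff f A" using AB unfolding lex_prec_def rdiff_def by linarith
  qed
  have b: "\<forall>i j. (i, j) \<in> D \<and> (i + 1, j) \<in> D \<longrightarrow> rdiff f (i + 1, j) \<le> rdiff f (i, j)"
  proof (intro allI impI)
    fix i j assume h: "(i, j) \<in> D \<and> (i + 1, j) \<in> D"
    define A where "A = (i, j)"
    define B where "B = (i+1, j)"
    have hA: "A \<in> D" and hB: "B \<in> D" using h A_def B_def by auto
    have rA: "row A = i" "col A = j" "row B = i + 1" "col B = j"
      by (simp_all add: A_def B_def row_def col_def)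
    have l: "lex_prec (f A) (f B)"
      proof (rule P1[OF hA hB])
      show "A \<noteq> B" using rA by auto
      show "weakly_NE A B" unfolding weakly_NE_def using rA by simp
    qed
    have "row (f A) \<noteq> row (f B)"
    proof
      assume e: "row (f A) = row (f B)"
      with l have c: "col (f A) < col (f B)" by (auto simp: lex_prec_def)
      have ne: "f B \<noteq> f A" using c by auto
      have "lex_prec (inv_into D f (f B)) (inv_into D f (f A))"
        by (rule P2[OF fin[OF hB] fin[OF hA] ne]) (simp add: weakly_NE_def e c less_imp_le)
      then have "lex_prec B A" by (simp add: invf hA hB)
      then show False using rA unfolding lex_prec_def by linarith
    qed
    then show "rdiff f (i + 1, j) \<le> rdiff f (i, j)"
      using l rA unfolding lex_prec_def rdiff_def A_def[symmetric] B_def[symmetric] by linarith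
  qed
  have c: "\<forall>T\<in>E. \<forall>T'\<in>E. row T = row T' \<and> col T' < col T \<longrightarrow> rdiff' f D T \<le> rdiff' f D T'"
  proof (intro ballI impI)
    fix T T' assume h: "T \<in> E" "T' \<in> E" "row T = row T' \<and> col T' < col T"
    have "lex_prec (inv_into D f T) (inv_into D f T')"
      by (rule P2) (use h in \<open>auto simp: weakly_NE_def\<close>)
    then show "rdiff' f D T \<le> rdiff' f D T'"
      using h finv[OF h(1)] finv[OF h(2)] unfolding lex_prec_def rdiff_def rdiff'_def by (simp only:) linarith
  qed
  have d: "\<forall>i j. (i, j) \<in> E \<and> (i + 1, j) \<in> E \<longrightarrow> rdiff' f D (i, j) \<le> rdiff' f D (i + 1, j)"
  proof (intro allI impI)
    fix i j assume h: "(i, j) \<in> E \<and> (i + 1, j) \<in> E"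
    define T where "T = (i, j)"
    define T' where "T' = (i+1, j)"
    have hT: "T \<in> E" and hT': "T' \<in> E" using h T_def T'_def by auto
    have rT: "row T = i" "col T = j" "row T' = i + 1" "col T' = j"
      by (simp_all add: T_def T'_def row_def col_def)
    define A where "A = inv_into D f T"
    define B where "B = inv_into D f T'"
    have hA: "A \<in> D" and hB: "B \<in> D" using invin hT hT' A_def B_def by auto
    have fA: "f A = T" and fB: "f B = T'" using finv hT hT' A_def B_def by auto
    have l: "lex_prec A B" unfolding A_def B_def
      proof (rule P2[OF hT hT'])
      show "T \<noteq> T'" using rT by auto
      show "weakly_NE T T'" unfolding weakly_NE_def using rT by simp
    qed
    have "row A \<noteq> row B"
    proof
      assume e: "row A = row B"
      with l have c: "col A < col B" by (auto simp: lex_prec_def)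
      have ne: "B \<noteq> A" using c by auto
      have "lex_prec (f B) (f A)"
        by (rule P1[OF hB hA ne]) (simp add: weakly_NE_def e c less_imp_le)
      then have "lex_prec T' T" by (simp add: fA fB)
      then show False using rT unfolding lex_prec_def by linarith
    qed
    then show "rdiff' f D (i, j) \<le> rdiff' f D (i + 1, j)"
      using l rT fA fB unfolding lex_prec_def rdiff_def rdiff'_def
        T_def[symmetric] T'_def[symmetric] A_def[symmetric] B_def[symmetric] by (simp only: fA fB) auto
  qed
  show ?thesis using a b c d by blast
qed

end
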